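(* Let $(X,d)$ be a compact doubling metric space with $\operatorname{diam}(X,d)=1/2$ and $(\mathcal S,D_2)$ a hyperbolic filling with parameters $a\ge\lambda\ge6$. Let $\rho:\mathcal S\to(0,\infty)$ satisfy (H3'). Let $k\ge0$, $v\in\mathcal S_k$, and let $\gamma=(v_1,\dots,v_N)$ be a horizontal path of level $k+1$ with $\pi_1(v_i)\in B(\pi_1(v),3a^{-k})$ for all $i$, $\pi_1(v_1)\in B(\pi_1(v),a^{-k})$ and $\pi_1(v_N)\notin B(\pi_1(v),2a^{-k})$. Let $w$ be the parent of $v_1$. Then \[ \sum_{i=1}^{N-1}\pi^*(v_i)\wedge\pi^*(v_{i+1})\ge\max\{\pi^*(v),\pi^*(w)\}. \]
   Context: Hyperbolic filling: $X_0\subset X_1\subset\cdots$ increasing, $X_n$ maximal $a^{-n}$-separated in $X$ ($X_0=\{x_0\}$); $\mathcal S_n=\{(x,n):x\in X_n\}$, $\mathcal S=\bigcup_n\mathcal S_n$, $\pi_1(x,n)=x$, $\pi_2(x,n)=n$, $v_0=(x_0,0)$, $B_v=B(\pi_1(v),a^{-\pi_2(v)})$. Each $(x,n)$, $n\ge1$, has a fixed parent $(y,n-1)$ with $d(x,y)=\min_{z\in X_{n-1}}d(x,z)$; genealogy $g(v)=(v_0,\dots,v_k=v)$. Graph $(\mathcal S,D_2)$: edges vertex–parent and horizontal edges between distinct $(x,n),(y,n)$ with $B(x,\lambda a^{-n})\cap B(y,\lambda a^{-n})\ne\emptyset$. A horizontal path of level $k+1$ is a sequence of vertices of $\mathcal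 S_{k+1}$, consecutive ones joined by horizontal edges. For $u\in\mathcal S_k$, $\Gamma_k(u)$ is the set of horizontal paths $(u_1,\dots,u_n)$ of level $k+1$ with $\pi_1(u_1)\in B_u$ and $\pi_1(u_n)\notin B(\pi_1(u),2a^{-k})$. $\pi(u)=\prod_{w\in g(u)}\rho(w)$; $\rho^*(u)=\min\{\rho(w):\pi_2(w)=\pi_2(u),D_2(u,w)\le1\}$; $\pi^*(u)=\min\{\pi(w):\pi_2(w)=\pi_2(u),D_2(u,w)\le1\}$; for a horizontal path $\gamma=(u_1,\dots,u_N)$, $L_h(\gamma,\rho)=\sum_{j=1}^{N-1}\rho^*(u_j)\wedge\rho^*(u_{j+1})$. (H3'): for all $k\ge0$, $u\in\mathcal S_k$, $\gamma\in\Gamma_k(u)$, $L_h(\gamma,\rho)\ge1$. *)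

theory Defs
  imports "HOL-Analysis.Analysis"
begin

definition Bx :: "'a::metric_space set \<Rightarrow> 'a \<Rightarrow> real \<Rightarrow> 'a set" where
  "Bx X x r = {y \<in> X. dist x y < r}"

definition doubling :: "'a::metric_space set \<Rightarrow> bool" where
  "doubling X \<longleftrightarrow> (\<exists>C::nat. \<forall>x\<in>X. \<forall>r>0. \<exists>F. finite F \<and> card F \<le> C \<and> F \<subseteq> X \<and>
      Bx X x (2*r) \<subseteq> (\<Union>y\<in>F. Bx X y r))"

definition separated :: "'a::metric_space set \<Rightarrow> real \<Rightarrow> bool" where
  "separated A e \<longleftrightarrow> (\<forall>x\<in>A. \<forall>y\<in>A. x \<noteq> y \<longrightarrow> dist x y \<ge> e)"

definition maximal_separated :: "'a::metric_space set \<Rightarrow> 'a set \<Rightarrow> real \<Rightarrow> bool" where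
  "maximal_separated X A e \<longleftrightarrow> A \<subseteq> X \<and> separated A e \<and>
      (\<forall>B. A \<subseteq> B \<and> B \<subseteq> X \<and> separated B e \<longrightarrow> B = A)"

definition hf_S :: "(nat \<Rightarrow> 'a set) \<Rightarrow> ('a \<times> nat) set" where
  "hf_S Xs = {(x,n). x \<in> Xs n}"

definition hf_level :: "(nat \<Rightarrow> 'a set) \<Rightarrow> nat \<Rightarrow> ('a \<times> nat) set" where
  "hf_level Xs n = {(x,m). x \<in> Xs n \<and> m = n}"

definition hyperbolic_filling ::
  "'a::metric_space set \<Rightarrow> real \<Rightarrow> 'a \<Rightarrow> (nat \<Rightarrow> 'a set) \<Rightarrow> ('a \<times> nat \<Rightarrow> 'a \<times> nat) \<Rightarrow> bool" where
  "hyperbolic_filling X a x0 Xs par \<longleftrightarrow>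
     Xs 0 = {x0} \<and> x0 \<in> X \<and>
     (\<forall>n. Xs n \<subseteq> Xs (Suc n)) \<and>
     (\<forall>n. maximal_separated X (Xs n) (a powi (- int n))) \<and>
     (\<forall>x n. x \<in> Xs (Suc n) \<longrightarrow>
        (\<exists>y. par (x, Suc n) = (y, n) \<and> y \<in> Xs n \<and> (\<forall>z\<in>Xs n. dist x y \<le> dist x z)))"

definition hf_hedge :: "'a::metric_space set \<Rightarrow> real \<Rightarrow> real \<Rightarrow> (nat \<Rightarrow> 'a set) \<Rightarrow>
    'a \<times> nat \<Rightarrow> 'a \<times> nat \<Rightarrow> bool" where
  "hf_hedge X a lam Xs u w \<longleftrightarrow> u \<in> hf_S Xs \<and> w \<in> hf_S Xs \<and> snd u = snd w \<and> u \<noteq> w \<and>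
     Bx X (fst u) (lam * a powi (- int (snd u))) \<inter> Bx X (fst w) (lam * a powi (- int (snd u))) \<noteq> {}"

definition hf_edge :: "'a::metric_space set \<Rightarrow> real \<Rightarrow> real \<Rightarrow> (nat \<Rightarrow> 'a set) \<Rightarrow>
    ('a \<times> nat \<Rightarrow> 'a \<times> nat) \<Rightarrow> 'a \<times> nat \<Rightarrow> 'a \<times> nat \<Rightarrow> bool" where
  "hf_edge X a lam Xs par u w \<longleftrightarrow>
     (u \<in> hf_S Xs \<and> snd u \<ge> 1 \<and> w = par u) \<or> (w \<in> hf_S Xs \<and> snd w \<ge> 1 \<and> u = par w) \<or>
     hf_hedge X a lam Xs u w"

text \<open>Vertices w of the same level as u with D_2(u,w) \<le> 1.\<close>
definition hf_nbhd :: "'a::metric_space set \<Rightarrow> real \<Rightarrow> real \<Rightarrow> (nat \<Rightarrow> 'a set) \<Rightarrow>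
    ('a \<times> nat \<Rightarrow> 'a \<times> nat) \<Rightarrow> 'a \<times> nat \<Rightarrow> ('a \<times> nat) set" where
  "hf_nbhd X a lam Xs par u =
     {w \<in> hf_S Xs. snd w = snd u \<and> (w = u \<or> hf_edge X a lam Xs par u w)}"

definition hf_pi :: "('a \<times> nat \<Rightarrow> 'a \<times> nat) \<Rightarrow> ('a \<times> nat \<Rightarrow> real) \<Rightarrow> 'a \<times> nat \<Rightarrow> real" where
  "hf_pi par rho u = (\<Prod>i\<in>{0..snd u}. rho ((par ^^ i) u))"

definition hf_rho_star :: "'a::metric_space set \<Rightarrow> real \<Rightarrow> real \<Rightarrow> (nat \<Rightarrow> 'a set) \<Rightarrow>
    ('a \<times> nat \<Rightarrow> 'a \<times> nat) \<Rightarrow> ('a \<times> nat \<Rightarrow> real) \<Rightarrow> 'a \<times> nat \<Rightarrow> real" where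
  "hf_rho_star X a lam Xs par rho u = Inf (rho ` hf_nbhd X a lam Xs par u)"

definition hf_pi_star :: "'a::metric_space set \<Rightarrow> real \<Rightarrow> real \<Rightarrow> (nat \<Rightarrow> 'a set) \<Rightarrow>
    ('a \<times> nat \<Rightarrow> 'a \<times> nat) \<Rightarrow> ('a \<times> nat \<Rightarrow> real) \<Rightarrow> 'a \<times> nat \<Rightarrow> real" where
  "hf_pi_star X a lam Xs par rho u = Inf (hf_pi par rho ` hf_nbhd X a lam Xs par u)"

definition horizontal_path :: "'a::metric_space set \<Rightarrow> real \<Rightarrow> real \<Rightarrow> (nat \<Rightarrow> 'a set) \<Rightarrow>
    nat \<Rightarrow> ('a \<times> nat) list \<Rightarrow> bool" where
  "horizontal_path X a lam Xs m \<gamma> \<longleftrightarrow> \<gamma> \<noteq> [] \<and> set \<gamma> \<subseteq> hf_level Xs m \<and>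
     (\<forall>i. Suc i < length \<gamma> \<longrightarrow> hf_hedge X a lam Xs (\<gamma> ! i) (\<gamma> ! Suc i))"

definition Gamma :: "'a::metric_space set \<Rightarrow> real \<Rightarrow> real \<Rightarrow> (nat \<Rightarrow> 'a set) \<Rightarrow>
    nat \<Rightarrow> 'a \<times> nat \<Rightarrow> ('a \<times> nat) list set" where
  "Gamma X a lam Xs k u = {\<gamma>. horizontal_path X a lam Xs (Suc k) \<gamma> \<and>
     fst (hd \<gamma>) \<in> Bx X (fst u) (a powi (- int k)) \<and>
     fst (last \<gamma>) \<notin> Bx X (fst u) (2 * a powi (- int k))}"

definition L_h :: "'a::metric_space set \<Rightarrow> real \<Rightarrow> real \<Rightarrow> (nat \<Rightarrow> 'a set) \<Rightarrow>
    ('a \<times> nat \<Rightarrow> 'a \<times> nat) \<Rightarrow> ('a \<times> nat \<Rightarrow> real) \<Rightarrow> ('a \<times> nat) list \<Rightarrow> real" where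
  "L_h X a lam Xs par rho \<gamma> = (\<Sum>j<length \<gamma> - 1.
      min (hf_rho_star X a lam Xs par rho (\<gamma> ! j)) (hf_rho_star X a lam Xs par rho (\<gamma> ! Suc j)))"

definition H3' :: "'a::metric_space set \<Rightarrow> real \<Rightarrow> real \<Rightarrow> (nat \<Rightarrow> 'a set) \<Rightarrow>
    ('a \<times> nat \<Rightarrow> 'a \<times> nat) \<Rightarrow> ('a \<times> nat \<Rightarrow> real) \<Rightarrow> bool" where
  "H3' X a lam Xs par rho \<longleftrightarrow> (\<forall>k. \<forall>u\<in>hf_level Xs k. \<forall>\<gamma>\<in>Gamma X a lam Xs k u.
      L_h X a lam Xs par rho \<gamma> \<ge> 1)"

end

theory Submission
  imports Defs
begin

lemma hf_par:
  assumes "hyperbolic_filling X a x0 Xs par" "x \<in> Xs (Suc n)"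
  obtains y where "par (x, Suc n) = (y,n)" "y \<in> Xs n" "\<forall>z\<in>Xs n. dist x y \<le> dist x z"
  using assms unfolding hyperbolic_filling_def by blast

lemma hf_iter:
  assumes HF: "hyperbolic_filling X a x0 Xs par" and "x \<in> Xs n"
  shows "i \<le> n \<Longrightarrow> (par^^i) (x,n) \<in> hf_S Xs \<and> snd ((par^^i) (x,n)) = n - i"
proof (induction i)
  case 0
  then show ?case using assms by (simp add: hf_S_def)
next
  case (Suc i)
  then have IH: "(par^^i) (x,n) \<in> hf_S Xs" "snd ((par^^i) (x,n)) = n - i" by auto
  obtain x' m where e: "(par^^i) (x,n) = (x', m)" by fastforce
  have ss: "Suc (n - Suc i) = n - i" using Suc.prems by arith
  with IH e have m: "m = Suc (n - Suc i)" and x': "x' \<in> Xs (Suc (n - Suc i))"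
    by (auto simp: hf_S_def)
  obtain y where "par (x', Suc (n - Suc i)) = (y, n - Suc i)" "y \<in> Xs (n - Suc i)"
    using hf_par[OF HF x'] by blast
  then show ?case using e m by (simp add: hf_S_def)
qed

lemma hf_pi_pos:
  assumes HF: "hyperbolic_filling X a x0 Xs par" and pos: "\<forall>u\<in>hf_S Xs. rho u > 0"
    and u: "u \<in> hf_S Xs"
  shows "hf_pi par rho u > 0"
proof -
  obtain x n where e: "u = (x,n)" and x: "x \<in> Xs n" using u by (auto simp: hf_S_def)
  show ?thesis unfolding hf_pi_def
    by (rule prod_pos) (use hf_iter[OF HF x] pos e in auto)
qed

lemma hf_pi_rec:
  assumes "snd (par (x, Suc n)) = n"
  shows "hf_pi par rho (x, Suc n) = rho (x, Suc n) * hf_pi par rho (par (x, Suc n))"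
  unfolding hf_pi_def using assms
  apply (simp only: snd_conv assms)
  apply (subst prod.atLeast0_atMost_Suc_shift)
  apply (simp only: comp_def funpow_Suc_right o_apply funpow_0)
  done

lemma hf_close:
  assumes HF: "hyperbolic_filling X a x0 Xs par" and a: "a > 0" and x: "x \<in> Xs (Suc n)"
  shows "\<exists>z\<in>Xs n. dist x z < a powi (- int n)"
proof (rule ccontr)
  let ?e = "a powi (- int n)"
  assume "\<not> ?thesis"
  then have far: "\<forall>z\<in>Xs n. dist x z \<ge> ?e" by auto
  have ms: "maximal_separated X (Xs n) ?e" "maximal_separated X (Xs (Suc n)) (a powi (- int (Suc n)))"
    using HF unfolding hyperbolic_filling_def by blast+
  have "x \<in> X" using ms(2) x unfolding maximal_separated_def by blast
  moreover have "separated (insert x (Xs n)) ?e"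
    using ms(1) far unfolding maximal_separated_def separated_def by (auto simp: dist_commute)
  ultimately have "insert x (Xs n) = Xs n" using ms(1) unfolding maximal_separated_def by blast
  then have "x \<in> Xs n" by blast
  moreover have "?e > 0" using a by simp
  ultimately show False using far by fastforce
qed


lemma hf_level_iff: "u \<in> hf_level Xs n \<longleftrightarrow> fst u \<in> Xs n \<and> snd u = n"
  by (cases u) (auto simp: hf_level_def)

lemma hf_S_iff: "u \<in> hf_S Xs \<longleftrightarrow> fst u \<in> Xs (snd u)"
  by (cases u) (auto simp: hf_S_def)

lemma hf_par':
  assumes HF: "hyperbolic_filling X a x0 Xs par" and u: "u \<in> hf_level Xs (Suc n)"
  shows "par u \<in> hf_level Xs n \<and> (\<forall>z\<in>Xs n. dist (fst u) (fst (par u)) \<le> dist (fst u) z)"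
proof -
  obtain x where e: "u = (x, Suc n)" and x: "x \<in> Xs (Suc n)" using u by (cases u) (auto simp: hf_level_iff)
  obtain y where "par (x, Suc n) = (y,n)" "y \<in> Xs n" "\<forall>z\<in>Xs n. dist x y \<le> dist x z"
    using hf_par[OF HF x] by blast
  then show ?thesis using e by (simp add: hf_level_iff)
qed

lemma hf_par_close:
  assumes HF: "hyperbolic_filling X a x0 Xs par" and a: "a > 0" and u: "u \<in> hf_level Xs (Suc n)"
  shows "par u \<in> hf_level Xs n \<and> dist (fst u) (fst (par u)) < a powi (- int n)"
proof -
  have p: "par u \<in> hf_level Xs n" "\<forall>z\<in>Xs n. dist (fst u) (fst (par u)) \<le> dist (fst u) z"
    using hf_par'[OF HF u] by auto
  obtain z where "z \<in> Xs n" "dist (fst u) z < a powi (- int n)"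
    using hf_close[OF HF a] u by (auto simp: hf_level_iff)
  with p show ?thesis by fastforce
qed

theorem lemma3p18:
  fixes X :: "'a::metric_space set" and a lam :: real and x0 :: 'a
    and Xs :: "nat \<Rightarrow> 'a set" and par :: "'a \<times> nat \<Rightarrow> 'a \<times> nat"
    and rho :: "'a \<times> nat \<Rightarrow> real" and k :: nat and v w :: "'a \<times> nat"
    and \<gamma> :: "('a \<times> nat) list"
  assumes "compact X" and "doubling X" and "diameter X = 1/2"
    and "hyperbolic_filling X a x0 Xs par"
    and "a \<ge> lam" and "lam \<ge> 6"
    and "\<forall>u\<in>hf_S Xs. rho u > 0"
    and "H3' X a lam Xs par rho"
    and "v \<in> hf_level Xs k"
    and "horizontal_path X a lam Xs (Suc k) \<gamma>"
    and "\<forall>u\<in>set \<gamma>. fst u \<in> Bx X (fst v) (3 * a powi (- int k))"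
    and "fst (hd \<gamma>) \<in> Bx X (fst v) (a powi (- int k))"
    and "fst (last \<gamma>) \<notin> Bx X (fst v) (2 * a powi (- int k))"
    and "w = par (hd \<gamma>)"
  shows "(\<Sum>i<length \<gamma> - 1. min (hf_pi_star X a lam Xs par rho (\<gamma> ! i))
                                    (hf_pi_star X a lam Xs par rho (\<gamma> ! Suc i)))
         \<ge> max (hf_pi_star X a lam Xs par rho v) (hf_pi_star X a lam Xs par rho w)"
proof -
  note HF = assms(4)
  have a6: "a \<ge> 6" using assms(5,6) by linarith
  have a0: "a > 0" using a6 by linarith
  define r where "r = a powi (- int k)"
  have r0: "r > 0" unfolding r_def using a0 by simp
  have pinv: "\<And>n. a powi (- int n) = inverse (a ^ n)"
    by (simp only: power_int_minus power_int_of_nat)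
  have rS: "a powi (- int (Suc k)) = r / a" unfolding r_def pinv using a0
    by (simp add: field_simps)
  have lamr: "6 * r \<le> lam * r" using assms(6) r0 by simp
  have lam0: "lam > 0" using assms(6) by linarith
  have hp: "\<gamma> \<noteq> []" "set \<gamma> \<subseteq> hf_level Xs (Suc k)"
    using assms(10) unfolding horizontal_path_def by auto
  have lev_S: "\<And>u n. u \<in> hf_level Xs n \<Longrightarrow> u \<in> hf_S Xs" by (simp add: hf_level_iff hf_S_iff)
  have Xsub: "\<And>n. Xs n \<subseteq> X" using HF unfolding hyperbolic_filling_def maximal_separated_def by blast
  have vX: "fst v \<in> X" using assms(9) Xsub by (auto simp: hf_level_iff)
  let ?N = "hf_nbhd X a lam Xs par"
  have nb: "p \<in> ?N q" if p: "p \<in> hf_level Xs k" and q: "q \<in> hf_level Xs k"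
    and dp: "dist (fst p) (fst v) < lam * r" and dq: "dist (fst q) (fst v) < lam * r" for p q
  proof (cases "p = q")
    case True
    then show ?thesis using p lev_S unfolding hf_nbhd_def by auto
  next
    case False
    have "fst v \<in> Bx X (fst q) (lam * a powi (- int (snd q))) \<inter> Bx X (fst p) (lam * a powi (- int (snd q)))"
      using vX dp dq q unfolding Bx_def r_def by (auto simp: hf_level_iff dist_commute)
    then have "hf_hedge X a lam Xs q p" unfolding hf_hedge_def using p q lev_S False
      by (auto simp: hf_level_iff)
    then show ?thesis using p q lev_S unfolding hf_nbhd_def hf_edge_def by (auto simp: hf_level_iff)
  qed
  have Nlev: "u \<in> hf_level Xs (Suc k) \<and> dist (fst u) (fst x) < 2 * r"
    if x: "x \<in> hf_level Xs (Suc k)" and u: "u \<in> ?N x" for u x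
  proof -
    have uS: "u \<in> hf_S Xs" and su: "snd u = Suc k" and alt: "u = x \<or> hf_edge X a lam Xs par x u"
      using u x unfolding hf_nbhd_def by (auto simp: hf_level_iff)
    have ul: "u \<in> hf_level Xs (Suc k)" using uS su by (simp add: hf_level_iff hf_S_iff)
    have px: "snd (par x) = k" using hf_par'[OF HF x] by (simp add: hf_level_iff)
    have pu: "snd (par u) = k" using hf_par'[OF HF ul] by (simp add: hf_level_iff)
    have "dist (fst u) (fst x) < 2 * r"
    proof (cases "u = x")
      case True then show ?thesis using r0 by simp
    next
      case False
      with alt have "hf_edge X a lam Xs par x u" by blast
      then have "hf_hedge X a lam Xs x u"
        unfolding hf_edge_def using px pu su x by (auto simp: hf_level_iff)
      then obtain z where z1: "dist (fst x) z < lam * (r / a)" and z2: "dist (fst u) z < lam * (r / a)"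
        unfolding hf_hedge_def Bx_def using x rS by (auto simp: hf_level_iff)
      have "lam * (r / a) \<le> r" using assms(5) r0 a0 lam0
        by (simp add: field_simps mult_right_mono)
      then show ?thesis using z1 z2 dist_triangle[of "fst u" "fst x" z] by (simp add: dist_commute)
    qed
    then show ?thesis using ul by blast
  qed
  have hd0: "hd \<gamma> \<in> hf_level Xs (Suc k)" using hp by auto
  have wl: "w \<in> hf_level Xs k" and dw0: "dist (fst (hd \<gamma>)) (fst w) < r"
    using hf_par_close[OF HF a0 hd0] assms(14) r_def by auto
  have dhd: "dist (fst v) (fst (hd \<gamma>)) < r" using assms(12) unfolding Bx_def r_def by auto
  have dw: "dist (fst w) (fst v) < lam * r"
  proof -
    have "dist (fst w) (fst v) \<le> dist (fst w) (fst (hd \<gamma>)) + dist (fst (hd \<gamma>)) (fst v)"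
      by (rule dist_triangle)
    then have "dist (fst w) (fst v) < 2 * r" using dw0 dhd by (simp add: dist_commute)
    then show ?thesis using lamr r0 by linarith
  qed
  have parN: "par u \<in> ?N v \<and> par u \<in> ?N w" if i: "i < length \<gamma>" and u: "u \<in> ?N (\<gamma> ! i)" for i u
  proof -
    have gi: "\<gamma> ! i \<in> hf_level Xs (Suc k)" using hp i by auto
    have gv: "dist (fst v) (fst (\<gamma> ! i)) < 3 * r" using assms(11) i unfolding Bx_def r_def by auto
    from Nlev[OF gi u] have ul: "u \<in> hf_level Xs (Suc k)" and d1: "dist (fst u) (fst (\<gamma> ! i)) < 2 * r"
      by auto
    have pl: "par u \<in> hf_level Xs k" and d2: "dist (fst u) (fst (par u)) < r"
      using hf_par_close[OF HF a0 ul] r_def by auto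
    have "dist (fst (par u)) (fst v) \<le> dist (fst (par u)) (fst u) + dist (fst u) (fst v)"
      by (rule dist_triangle)
    moreover have "dist (fst u) (fst v) \<le> dist (fst u) (fst (\<gamma> ! i)) + dist (fst (\<gamma> ! i)) (fst v)"
      by (rule dist_triangle)
    ultimately have "dist (fst (par u)) (fst v) < 6 * r"
      using d1 d2 gv by (simp add: dist_commute)
    then have "dist (fst (par u)) (fst v) < lam * r" using lamr by linarith
    then show ?thesis using nb[OF pl assms(9)] nb[OF pl wl] dw assms(9) r0 lam0
      by (simp add: dist_commute)
  qed
  have piS: "\<And>u. u \<in> hf_S Xs \<Longrightarrow> hf_pi par rho u > 0" using hf_pi_pos[OF HF assms(7)] by blast
  have NS: "\<And>q. ?N q \<subseteq> hf_S Xs" unfolding hf_nbhd_def by blast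
  have selfN: "\<And>q. q \<in> hf_S Xs \<Longrightarrow> q \<in> ?N q" unfolding hf_nbhd_def by blast
  have piN: "\<And>q p. p \<in> ?N q \<Longrightarrow> 0 \<le> hf_pi par rho p"
    using NS piS by (meson less_imp_le subsetD)
  have rhoN: "\<And>q p. p \<in> ?N q \<Longrightarrow> 0 \<le> rho p"
    using NS assms(7) by (meson less_imp_le subsetD)
  have pistar_lower: "hf_pi_star X a lam Xs par rho q \<le> hf_pi par rho p" if "p \<in> ?N q" for p q
    unfolding hf_pi_star_def
  proof (rule cInf_lower)
    show "hf_pi par rho p \<in> hf_pi par rho ` ?N q" using that by blast
    show "bdd_below (hf_pi par rho ` ?N q)" by (rule bdd_belowI[where m=0]) (use piN in blast)
  qed
  have pistar_nn: "hf_pi_star X a lam Xs par rho q \<ge> 0" if "q \<in> hf_S Xs" for q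
    unfolding hf_pi_star_def
  proof (rule cInf_greatest)
    show "hf_pi par rho ` ?N q \<noteq> {}" using selfN[OF that] by blast
  qed (use piN in blast)
  have rhostar_lower: "hf_rho_star X a lam Xs par rho q \<le> rho p" if "p \<in> ?N q" for p q
    unfolding hf_rho_star_def
  proof (rule cInf_lower)
    show "rho p \<in> rho ` ?N q" using that by blast
    show "bdd_below (rho ` ?N q)" by (rule bdd_belowI[where m=0]) (use rhoN in blast)
  qed
  define M where "M = max (hf_pi_star X a lam Xs par rho v) (hf_pi_star X a lam Xs par rho w)"
  have M0: "M \<ge> 0" unfolding M_def using pistar_nn[OF lev_S[OF assms(9)]] by simp
  have key: "hf_rho_star X a lam Xs par rho (\<gamma> ! i) * M \<le> hf_pi_star X a lam Xs par rho (\<gamma> ! i)"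
    if i: "i < length \<gamma>" for i
  proof -
    have gi: "\<gamma> ! i \<in> hf_level Xs (Suc k)" using hp i by auto
    show ?thesis unfolding hf_pi_star_def[of X a lam Xs par rho "\<gamma> ! i"]
    proof (rule cInf_greatest)
      show "hf_pi par rho ` ?N (\<gamma> ! i) \<noteq> {}" using selfN lev_S[OF gi] by blast
    next
      fix y assume "y \<in> hf_pi par rho ` ?N (\<gamma> ! i)"
      then obtain u where u: "u \<in> ?N (\<gamma> ! i)" and y: "y = hf_pi par rho u" by blast
      from Nlev[OF gi u] have ul: "u \<in> hf_level Xs (Suc k)" by blast
      obtain x where ue: "u = (x, Suc k)" using ul by (cases u) (auto simp: hf_level_iff)
      have sp: "snd (par u) = k" using hf_par'[OF HF ul] by (simp add: hf_level_iff)
      have rec: "hf_pi par rho u = rho u * hf_pi par rho (par u)"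
        using hf_pi_rec[of par x k rho] sp ue by simp
      from parN[OF i u] have "hf_pi_star X a lam Xs par rho v \<le> hf_pi par rho (par u)"
        "hf_pi_star X a lam Xs par rho w \<le> hf_pi par rho (par u)"
        using pistar_lower by auto
      then have m1: "M \<le> hf_pi par rho (par u)" unfolding M_def by simp
      have m2: "hf_rho_star X a lam Xs par rho (\<gamma> ! i) \<le> rho u" using rhostar_lower[OF u] .
      have "hf_rho_star X a lam Xs par rho (\<gamma> ! i) * M \<le> rho u * hf_pi par rho (par u)"
        by (rule mult_mono[OF m2 m1]) (use lev_S[OF ul] assms(7) M0 in \<open>auto intro: less_imp_le\<close>)
      then show "hf_rho_star X a lam Xs par rho (\<gamma> ! i) * M \<le> y" using y rec by simp
    qed
  qed
  have G: "\<gamma> \<in> Gamma X a lam Xs k v" unfolding Gamma_def using assms(10,12,13) by blast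
  have L1: "L_h X a lam Xs par rho \<gamma> \<ge> 1" using assms(8,9) G unfolding H3'_def by blast
  have "M \<le> L_h X a lam Xs par rho \<gamma> * M" using mult_right_mono[OF L1 M0] by simp
  also have "\<dots> = (\<Sum>j<length \<gamma> - 1. min (hf_rho_star X a lam Xs par rho (\<gamma> ! j))
      (hf_rho_star X a lam Xs par rho (\<gamma> ! Suc j)) * M)"
    unfolding L_h_def by (simp add: sum_distrib_right)
  also have "\<dots> \<le> (\<Sum>i<length \<gamma> - 1. min (hf_pi_star X a lam Xs par rho (\<gamma> ! i))
                                    (hf_pi_star X a lam Xs par rho (\<gamma> ! Suc i)))"
  proof (rule sum_mono)
    fix j assume "j \<in> {..<length \<gamma> - 1}"
    then have j: "j < length \<gamma>" "Suc j < length \<gamma>" by auto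
    have "min (hf_rho_star X a lam Xs par rho (\<gamma> ! j)) (hf_rho_star X a lam Xs par rho (\<gamma> ! Suc j)) * M
       = min (hf_rho_star X a lam Xs par rho (\<gamma> ! j) * M) (hf_rho_star X a lam Xs par rho (\<gamma> ! Suc j) * M)"
      using M0 by (simp add: min_mult_distrib_right)
    then show "min (hf_rho_star X a lam Xs par rho (\<gamma> ! j)) (hf_rho_star X a lam Xs par rho (\<gamma> ! Suc j)) * M
      \<le> min (hf_pi_star X a lam Xs par rho (\<gamma> ! j)) (hf_pi_star X a lam Xs par rho (\<gamma> ! Suc j))"
      using key[OF j(1)] key[OF j(2)] by linarith
  qed
  finally show ?thesis unfolding M_def .
qed

end
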